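(* Let $G$ be a finite abelian group, let $G_1,\dots,G_n,H$ be subgroups of $G$, and fix a character $\chi$ on $G$. Let $K=\bigcap_{i=1}^nG_i$. Then the number of tuples $(\chi_1,\dots,\chi_n)\in\widehat{G}^n$ such that $\chi_i(g)=1$ for all $g\in G_i$ and all $1\le i\le n$, and $\bigl(\prod_{i=1}^n\chi_i\bigr)(h)=\chi(h)$ for all $h\in H$, equals \[ \frac{|H\cap K|}{|H|}\cdot\prod_{i=1}^n\frac{|G|}{|G_i|}\cdot\llbracket\chi(H\cap K)=1\rrbracket. \]
   Context: $\widehat{G}$ is the group of characters (homomorphisms to the complex unit circle) of $G$. $\llbracket P\rrbracket$ is $1$ if $P$ holds and $0$ otherwise; $\chi(H\cap K)=1$ means $\chi$ is trivial on $H\cap K$. *)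

theory Defs
  imports Complex_Main "HOL-Algebra.Coset"
begin

text \<open>To make the set of characters a well-defined set of functions (for counting),
  characters are required to be 0 outside the carrier.\<close>
definition character :: "('a, 'b) monoid_scheme \<Rightarrow> ('a \<Rightarrow> complex) \<Rightarrow> bool" where
  "character G \<chi> \<longleftrightarrow>
     (\<forall>x\<in>carrier G. \<forall>y\<in>carrier G. \<chi> (x \<otimes>\<^bsub>G\<^esub> y) = \<chi> x * \<chi> y) \<and>
     (\<forall>x\<in>carrier G. cmod (\<chi> x) = 1) \<and>
     (\<forall>x. x \<notin> carrier G \<longrightarrow> \<chi> x = 0)"

definition characters :: "('a, 'b) monoid_scheme \<Rightarrow> ('a \<Rightarrow> complex) set" where
  "characters G = {\<chi>. character G \<chi>}"

end

theory Submission
  imports Defs "HOL-Library.FuncSet" "HOL-Algebra.FiniteProduct"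
begin

definition chr :: "('a, 'b) monoid_scheme \<Rightarrow> 'a set \<Rightarrow> ('a \<Rightarrow> complex) set" where
  "chr G S = {f. (\<forall>x\<in>S. \<forall>y\<in>S. f (x \<otimes>\<^bsub>G\<^esub> y) = f x * f y) \<and>
     (\<forall>x\<in>S. cmod (f x) = 1) \<and> (\<forall>x. x \<notin> S \<longrightarrow> f x = 0)}"

definition extn :: "('a, 'b) monoid_scheme \<Rightarrow> 'a set \<Rightarrow> 'a set \<Rightarrow> ('a \<Rightarrow> complex) \<Rightarrow> ('a \<Rightarrow> complex) set" where
  "extn G S U \<phi> = {\<psi> \<in> chr G U. \<forall>x\<in>S. \<psi> x = \<phi> x}"

locale fcg = comm_group G for G (structure) +
  assumes fin: "finite (carrier G)"
begin

lemma sub_pow_closed: "subgroup S G \<Longrightarrow> x \<in> S \<Longrightarrow> x [^] (k::nat) \<in> S"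
  by (induction k) (auto simp: subgroup.m_closed subgroup.one_closed)

lemma chrD:
  assumes "f \<in> chr G S"
  shows "\<And>x y. x \<in> S \<Longrightarrow> y \<in> S \<Longrightarrow> f (x \<otimes> y) = f x * f y"
    "\<And>x. x \<in> S \<Longrightarrow> cmod (f x) = 1" "\<And>x. x \<notin> S \<Longrightarrow> f x = 0"
  using assms by (auto simp: chr_def)

lemma chr_nz: "f \<in> chr G S \<Longrightarrow> x \<in> S \<Longrightarrow> f x \<noteq> 0"
  using chrD(2) by fastforce

lemma chr_one:
  assumes S: "subgroup S G" and f: "f \<in> chr G S"
  shows "f \<one> = 1"
proof -
  have o: "\<one> \<in> S" using S subgroup.one_closed by blast
  have "f \<one> = f \<one> * f \<one>" using chrD(1)[OF f o o] by simp
  moreover have "f \<one> \<noteq> 0" using chr_nz[OF f o] .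
  ultimately show ?thesis by (metis mult_cancel_left1)
qed

lemma chr_pow:
  assumes S: "subgroup S G" and f: "f \<in> chr G S" and x: "x \<in> S"
  shows "f (x [^] (k::nat)) = f x ^ k"
proof (induction k)
  case 0 then show ?case using chr_one[OF S f] by simp
next
  case (Suc k)
  have "f (x [^] Suc k) = f (x [^] k \<otimes> x)" by simp
  also have "\<dots> = f (x [^] k) * f x" using chrD(1)[OF f sub_pow_closed[OF S x] x] .
  finally show ?case using Suc by simp
qed

end

locale stepctx = fcg + fixes S g
  assumes S: "subgroup S G" and g: "g \<in> carrier G" and gS: "g \<notin> S"
begin

definition m :: nat where "m = (LEAST k. 0 < k \<and> g [^] k \<in> S)"
definition T where "T = {s \<otimes> g [^] k | s k. s \<in> S \<and> k < m}"

lemmas Sone = subgroup.one_closed[OF S]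
lemmas Smul = subgroup.m_closed[OF S]
lemmas Sinv = subgroup.m_inv_closed[OF S]

lemma Ssub: "x \<in> S \<Longrightarrow> x \<in> carrier G"
  by (rule subgroup.mem_carrier[OF S])

lemma m_props: "0 < m" "g [^] m \<in> S" "\<And>k. 0 < k \<Longrightarrow> k < m \<Longrightarrow> g [^] k \<notin> S"
proof -
  have ex: "\<exists>k::nat. 0 < k \<and> g [^] k \<in> S"
  proof (intro exI conjI)
    show "0 < card (carrier G)" using fin g by (auto simp: card_gt_0_iff)
    show "g [^] card (carrier G) \<in> S" using power_order_eq_one[OF fin g] Sone by simp
  qed
  show "0 < m" "g [^] m \<in> S" using LeastI_ex[OF ex] unfolding m_def by simp_all
  show "\<And>k. 0 < k \<Longrightarrow> k < m \<Longrightarrow> g [^] k \<notin> S"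
  proof -
    fix k :: nat assume "0 < k" "k < m"
    then show "g [^] k \<notin> S" using not_less_Least[of k "\<lambda>k. 0 < k \<and> g [^] k \<in> S"] unfolding m_def by auto
  qed
qed

lemma m2: "2 \<le> m"
proof -
  have "m \<noteq> 1"
  proof
    assume "m = 1"
    then have "g [^] (1::nat) \<in> S" using m_props(2) by simp
    moreover have "g [^] (1::nat) = g" using g by simp
    ultimately show False using gS by simp
  qed
  then show ?thesis using m_props(1) by linarith
qed

lemma decomp: assumes s: "s \<in> S"
  shows "s \<otimes> g [^] (j::nat) = (s \<otimes> (g [^] m) [^] (j div m)) \<otimes> g [^] (j mod m)"
proof -
  have "g [^] j = g [^] (m * (j div m) + j mod m)" by simp
  also have "\<dots> = (g [^] m) [^] (j div m) \<otimes> g [^] (j mod m)"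
    using g by (simp add: nat_pow_mult nat_pow_pow)
  finally show ?thesis
    using g s Ssub by (simp add: m_assoc)
qed

lemma rep: assumes s: "s \<in> S" shows "s \<otimes> g [^] (j::nat) \<in> T"
proof -
  have "s \<otimes> (g [^] m) [^] (j div m) \<in> S"
    using s m_props(2) sub_pow_closed[OF S] Smul by simp
  moreover have "j mod m < m" using m_props(1) by simp
  ultimately show ?thesis using decomp[OF s, of j] unfolding T_def by blast
qed

lemma uniq_aux:
  assumes s: "s \<in> S" "s' \<in> S" and k: "k \<le> k'" "k' < m" and eq: "s \<otimes> g [^] k = s' \<otimes> g [^] k'"
  shows "s = s' \<and> k = k'"
proof -
  have sc: "s \<in> carrier G" "s' \<in> carrier G" using s Ssub by auto
  have "g [^] k' = g [^] k \<otimes> g [^] (k' - k)" using g k by (simp add: nat_pow_mult)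
  then have eqq: "s \<otimes> g [^] k = (s' \<otimes> g [^] (k' - k)) \<otimes> g [^] k"
    using eq sc g by (simp add: m_ac)
  have c: "g [^] k \<in> carrier G" "s' \<otimes> g [^] (k' - k) \<in> carrier G" using sc g by auto
  have e2: "s = s' \<otimes> g [^] (k' - k)"
    using iffD1[OF right_cancel[OF c(1) sc(1) c(2)] eqq] .
  then have "inv s' \<otimes> s = g [^] (k' - k)" using sc g by (simp add: m_assoc[symmetric])
  moreover have "inv s' \<otimes> s \<in> S" using s Smul Sinv by simp
  ultimately have "g [^] (k' - k) \<in> S" by simp
  then have "k' - k = 0" using m_props(3)[of "k' - k"] k by linarith
  then show ?thesis using e2 k sc by simp
qed

lemma uniq:
  assumes "s \<in> S" "s' \<in> S" "k < m" "k' < m" "s \<otimes> g [^] k = s' \<otimes> g [^] k'"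
  shows "s = s' \<and> k = k'"
proof (cases "k \<le> k'")
  case True then show ?thesis using uniq_aux[of s s' k k'] assms by simp
next
  case False then show ?thesis using uniq_aux[of s' s k' k] assms by auto
qed

lemma T_carrier: "T \<subseteq> carrier G"
  unfolding T_def using Ssub g by auto

lemma T_sub: "subgroup T G"
proof (rule subgroupI)
  show "T \<subseteq> carrier G" by (rule T_carrier)
  show "T \<noteq> {}" using rep[OF Sone] by auto
next
  fix a assume "a \<in> T"
  then obtain s k where a: "a = s \<otimes> g [^] k" "s \<in> S" "k < m" unfolding T_def by blast
  define N where "N = card (carrier G)"
  have "g [^] (k * (N - 1)) \<otimes> g [^] k = g [^] (k * N)"
  proof -
    have "N > 0" using fin g N_def by (auto simp: card_gt_0_iff)
    then have "k * (N - 1) + k = k * N"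
      by (metis Suc_diff_1 add.commute mult_Suc_right)
    then show ?thesis using g by (simp add: nat_pow_mult)
  qed
  also have "\<dots> = (g [^] N) [^] k" using g by (simp add: nat_pow_pow mult.commute)
  also have "\<dots> = \<one>" using power_order_eq_one[OF fin g] unfolding N_def by simp
  finally have "inv (g [^] k) = g [^] (k * (N - 1))" using g by (intro inv_equality) auto
  then have "inv a = inv s \<otimes> g [^] (k * (N - 1))" using a g Ssub inv_mult by simp
  moreover have "inv s \<in> S" using a Sinv by simp
  ultimately show "inv a \<in> T" using rep by simp
next
  fix a b assume "a \<in> T" "b \<in> T"
  then obtain s s' and k k' :: nat where a: "a = s \<otimes> g [^] k" "s \<in> S" and b: "b = s' \<otimes> g [^] k'" "s' \<in> S"
    unfolding T_def by blast
  have "a \<otimes> b = (s \<otimes> s') \<otimes> g [^] (k + k')"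
    using a b Ssub g by (simp add: m_ac nat_pow_mult[symmetric])
  moreover have "s \<otimes> s' \<in> S" using a b Smul by simp
  ultimately show "a \<otimes> b \<in> T" using rep by simp
qed

lemma S_T: "S \<subseteq> T"
proof
  fix s assume "s \<in> S"
  then show "s \<in> T" using rep[of s 0] Ssub by simp
qed

lemma g_T: "g \<in> T"
  using rep[OF Sone, of 1] g by simp

lemma T_form: "t \<in> T \<Longrightarrow> \<exists>s\<in>S. \<exists>k::nat. t = s \<otimes> g [^] k"
  unfolding T_def by blast

lemma card_T: "card T = m * card S"
proof -
  have "T = (\<lambda>(s, k). s \<otimes> g [^] k) ` (S \<times> {..<m})" unfolding T_def by auto
  moreover have "inj_on (\<lambda>(s, k). s \<otimes> g [^] k) (S \<times> {..<m})"
    by (auto simp: inj_on_def dest: uniq)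
  ultimately have "card T = card (S \<times> {..<m})" by (simp add: card_image)
  then show ?thesis by (simp add: card_cartesian_product)
qed

end

context stepctx
begin

lemma ext_val:
  assumes psi: "\<psi> \<in> chr G T" and s: "s \<in> S"
  shows "\<psi> (s \<otimes> g [^] (k::nat)) = \<psi> s * \<psi> g ^ k"
proof -
  have sT: "s \<in> T" using s S_T by blast
  have gk: "g [^] k \<in> T" using sub_pow_closed[OF T_sub g_T] .
  show ?thesis using chrD(1)[OF psi sT gk] chr_pow[OF T_sub psi g_T] by simp
qed

lemma ext_count:
  assumes phi: "\<phi> \<in> chr G S"
  shows "card (extn G S T \<phi>) = m"
proof -
  define c where "c = \<phi> (g [^] m)"
  have c0: "c \<noteq> 0" unfolding c_def using chr_nz[OF phi m_props(2)] .
  have cn: "cmod c = 1" unfolding c_def using chrD(2)[OF phi m_props(2)] .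
  have bij: "bij_betw (\<lambda>\<psi>. \<psi> g) (extn G S T \<phi>) {z. z ^ m = c}"
    unfolding bij_betw_def
  proof (intro conjI)
    show "inj_on (\<lambda>\<psi>. \<psi> g) (extn G S T \<phi>)"
    proof (rule inj_onI)
      fix \<psi>1 \<psi>2 assume p1: "\<psi>1 \<in> extn G S T \<phi>" and p2: "\<psi>2 \<in> extn G S T \<phi>"
        and eq: "\<psi>1 g = \<psi>2 g"
      have c1: "\<psi>1 \<in> chr G T" "\<And>x. x \<in> S \<Longrightarrow> \<psi>1 x = \<phi> x" using p1 unfolding extn_def by auto
      have c2: "\<psi>2 \<in> chr G T" "\<And>x. x \<in> S \<Longrightarrow> \<psi>2 x = \<phi> x" using p2 unfolding extn_def by auto
      show "\<psi>1 = \<psi>2"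
      proof
        fix x show "\<psi>1 x = \<psi>2 x"
        proof (cases "x \<in> T")
          case True
          then obtain s and k :: nat where sk: "s \<in> S" "x = s \<otimes> g [^] k" using T_form by blast
          show ?thesis using ext_val[OF c1(1) sk(1), of k] ext_val[OF c2(1) sk(1), of k]
            c1(2)[OF sk(1)] c2(2)[OF sk(1)] eq sk(2) by simp
        next
          case False
          then show ?thesis using chrD(3)[OF c1(1)] chrD(3)[OF c2(1)] by simp
        qed
      qed
    qed
  next
    show "(\<lambda>\<psi>. \<psi> g) ` extn G S T \<phi> = {z. z ^ m = c}"
    proof (intro equalityI subsetI)
      fix z assume "z \<in> (\<lambda>\<psi>. \<psi> g) ` extn G S T \<phi>"
      then obtain \<psi> where p: "\<psi> \<in> extn G S T \<phi>" and z: "z = \<psi> g" by blast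
      have c1: "\<psi> \<in> chr G T" "\<And>x. x \<in> S \<Longrightarrow> \<psi> x = \<phi> x" using p unfolding extn_def by auto
      have "z ^ m = \<psi> (g [^] m)" using chr_pow[OF T_sub c1(1) g_T, of m] z by simp
      also have "\<dots> = c" using c1(2)[OF m_props(2)] c_def by simp
      finally show "z \<in> {z. z ^ m = c}" by simp
    next
      fix z assume "z \<in> {z. z ^ m = c}"
      then have zm: "z ^ m = c" by simp
      have zn: "cmod z = 1"
      proof -
        have "cmod z ^ m = 1 ^ m" using zm cn by (simp add: norm_power[symmetric])
        then show ?thesis using power_eq_imp_eq_base[OF _ norm_ge_zero zero_le_one m_props(1)] by blast
      qed
      define P where "P x p \<longleftrightarrow> fst p \<in> S \<and> snd p < m \<and> x = fst p \<otimes> g [^] snd p" for x and p :: "'a \<times> nat"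
      define sel where "sel x = (SOME p. P x p)" for x
      define \<psi> where "\<psi> x = (if x \<in> T then \<phi> (fst (sel x)) * z ^ snd (sel x) else 0)" for x
      have sel: "sel (s \<otimes> g [^] k) = (s, k)" if "s \<in> S" "k < m" for s k
      proof -
        have "P (s \<otimes> g [^] k) (s, k)" unfolding P_def using that by simp
        then have "P (s \<otimes> g [^] k) (sel (s \<otimes> g [^] k))" unfolding sel_def by (rule someI)
        then have "fst (sel (s \<otimes> g [^] k)) = s \<and> snd (sel (s \<otimes> g [^] k)) = k"
          unfolding P_def using uniq[of "fst (sel (s \<otimes> g [^] k))" s "snd (sel (s \<otimes> g [^] k))" k] that
          by auto
        then show ?thesis by (simp add: prod_eq_iff)
      qed
      have base: "\<psi> (s \<otimes> g [^] k) = \<phi> s * z ^ k" if "s \<in> S" "k < m" for s k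
        using sel[OF that] rep[OF that(1), of k] unfolding \<psi>_def by simp
      have gen: "\<psi> (s \<otimes> g [^] j) = \<phi> s * z ^ j" if s: "s \<in> S" for s j
      proof -
        have gms: "(g [^] m) [^] (j div m) \<in> S" using sub_pow_closed[OF S m_props(2)] .
        have s2: "s \<otimes> (g [^] m) [^] (j div m) \<in> S" using Smul[OF s gms] .
        have "\<psi> (s \<otimes> g [^] j) = \<phi> (s \<otimes> (g [^] m) [^] (j div m)) * z ^ (j mod m)"
          using decomp[OF s, of j] base[OF s2, of "j mod m"] m_props(1) by simp
        also have "\<phi> (s \<otimes> (g [^] m) [^] (j div m)) = \<phi> s * c ^ (j div m)"
          using chrD(1)[OF phi s gms] chr_pow[OF S phi m_props(2)] c_def by simp
        also have "c ^ (j div m) = z ^ (m * (j div m))" using zm by (simp add: power_mult)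
        finally have "\<psi> (s \<otimes> g [^] j) = \<phi> s * (z ^ (m * (j div m)) * z ^ (j mod m))"
          by (simp add: mult.assoc)
        also have "z ^ (m * (j div m)) * z ^ (j mod m) = z ^ j"
          by (simp add: power_add[symmetric])
        finally show ?thesis .
      qed
      have psichr: "\<psi> \<in> chr G T"
        unfolding chr_def
      proof (intro CollectI conjI ballI allI impI)
        fix x y assume x: "x \<in> T" and y: "y \<in> T"
        obtain s and k :: nat where sk: "s \<in> S" "x = s \<otimes> g [^] k" using T_form[OF x] by blast
        obtain s' and k' :: nat where sk': "s' \<in> S" "y = s' \<otimes> g [^] k'" using T_form[OF y] by blast
        have sc: "s \<in> carrier G" "s' \<in> carrier G" using sk sk' Ssub by auto
        have "x \<otimes> y = (s \<otimes> s') \<otimes> g [^] (k + k')"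
          using sk sk' sc g by (simp add: m_ac nat_pow_mult[symmetric])
        then have "\<psi> (x \<otimes> y) = \<phi> (s \<otimes> s') * z ^ (k + k')" using gen[OF Smul[OF sk(1) sk'(1)]] by simp
        also have "\<dots> = (\<phi> s * z ^ k) * (\<phi> s' * z ^ k')"
          using chrD(1)[OF phi sk(1) sk'(1)] by (simp add: power_add mult_ac)
        finally show "\<psi> (x \<otimes> y) = \<psi> x * \<psi> y" using gen[OF sk(1)] gen[OF sk'(1)] sk(2) sk'(2) by simp
      next
        fix x assume x: "x \<in> T"
        obtain s and k :: nat where sk: "s \<in> S" "x = s \<otimes> g [^] k" using T_form[OF x] by blast
        show "cmod (\<psi> x) = 1" using gen[OF sk(1)] sk(2) chrD(2)[OF phi sk(1)] zn
          by (simp add: norm_mult norm_power)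
      next
        fix x assume "x \<notin> T" then show "\<psi> x = 0" unfolding \<psi>_def by simp
      qed
      have psiS: "\<psi> s = \<phi> s" if "s \<in> S" for s
        using gen[OF that, of 0] Ssub[OF that] by simp
      have psig: "\<psi> g = z"
        using gen[OF Sone, of 1] g chr_one[OF S phi] by simp
      show "z \<in> (\<lambda>\<psi>. \<psi> g) ` extn G S T \<phi>"
        using psichr psiS psig unfolding extn_def by (intro image_eqI[of _ _ \<psi>]) auto
    qed
  qed
  show ?thesis using bij_betw_same_card[OF bij] card_nth_roots[OF c0 m_props(1)] by simp
qed

end

context fcg
begin

lemma ext_main:
  assumes "subgroup S G" "\<phi> \<in> chr G S"
  shows "card (extn G S (carrier G) \<phi>) * card S = card (carrier G)"
  using assms
proof (induction "card (carrier G) - card S" arbitrary: S \<phi> rule: less_induct)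
  case less
  note S = less.prems(1) and phi = less.prems(2)
  have Ssub: "S \<subseteq> carrier G" using subgroup.subset[OF S] .
  show ?case
  proof (cases "S = carrier G")
    case True
    have "extn G S (carrier G) \<phi> = {\<phi>}"
    proof (intro equalityI subsetI)
      fix \<psi> assume "\<psi> \<in> extn G S (carrier G) \<phi>"
      then have p: "\<psi> \<in> chr G (carrier G)" "\<And>x. x \<in> S \<Longrightarrow> \<psi> x = \<phi> x" unfolding extn_def by auto
      have "\<psi> = \<phi>"
      proof
        fix x show "\<psi> x = \<phi> x"
        proof (cases "x \<in> carrier G")
          case True then show ?thesis using p(2) \<open>S = carrier G\<close> by simp
        next
          case False then show ?thesis using chrD(3)[OF p(1)] chrD(3)[OF phi] \<open>S = carrier G\<close> by simp
        qed
      qed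
      then show "\<psi> \<in> {\<phi>}" by simp
    next
      fix \<psi> assume "\<psi> \<in> {\<phi>}"
      then show "\<psi> \<in> extn G S (carrier G) \<phi>" using phi True unfolding extn_def by simp
    qed
    then show ?thesis using True by simp
  next
    case False
    then obtain g where g: "g \<in> carrier G" "g \<notin> S" using Ssub by blast
    interpret st: stepctx G S g by unfold_locales
      (use g subgroup.mem_carrier[OF S] subgroup.m_closed[OF S] subgroup.one_closed[OF S] subgroup.m_inv_closed[OF S] in auto)
    have Spos: "card S > 0" using subgroup.finite_imp_card_positive[OF S fin] .
    have cT: "card st.T = st.m * card S" by (rule st.card_T)
    have m2: "2 \<le> st.m" by (rule st.m2)
    have "2 * card S \<le> st.m * card S" using m2 by simp
    then have lt: "card S < card st.T" using cT Spos by linarith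
    have Tle: "card st.T \<le> card (carrier G)" using card_mono[OF fin st.T_carrier] .
    have IH: "card (extn G st.T (carrier G) \<psi>) * card st.T = card (carrier G)" if "\<psi> \<in> chr G st.T" for \<psi>
      using less.hyps[OF _ st.T_sub that] lt Tle by linarith
    define E where "E = extn G S st.T \<phi>"
    have cE: "card E = st.m" unfolding E_def using st.ext_count[OF phi] .
    have finE: "finite E"
    proof (rule ccontr)
      assume "infinite E" then have "card E = 0" by simp
      then show False using cE m2 by simp
    qed
    have Npos: "card (carrier G) > 0" using fin by (auto simp: card_gt_0_iff)
    have finEx: "finite (extn G st.T (carrier G) \<psi>)" if "\<psi> \<in> E" for \<psi>
    proof -
      have "\<psi> \<in> chr G st.T" using that unfolding E_def extn_def by simp
      then have i: "card (extn G st.T (carrier G) \<psi>) * card st.T = card (carrier G)" by (rule IH)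
      show ?thesis
      proof (rule ccontr)
        assume "infinite (extn G st.T (carrier G) \<psi>)"
        then have "card (extn G st.T (carrier G) \<psi>) = 0" by simp
        then show False using i Npos by simp
      qed
    qed
    have dec: "extn G S (carrier G) \<phi> = (\<Union>\<psi>\<in>E. extn G st.T (carrier G) \<psi>)"
    proof (intro equalityI subsetI)
      fix \<chi> assume "\<chi> \<in> extn G S (carrier G) \<phi>"
      then have c: "\<chi> \<in> chr G (carrier G)" "\<And>x. x \<in> S \<Longrightarrow> \<chi> x = \<phi> x" unfolding extn_def by auto
      define \<psi> where "\<psi> x = (if x \<in> st.T then \<chi> x else 0)" for x
      have "\<psi> \<in> chr G st.T" unfolding chr_def
      proof (intro CollectI conjI ballI allI impI)
        fix x y assume x: "x \<in> st.T" and y: "y \<in> st.T"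
        have xy: "x \<otimes> y \<in> st.T" using subgroup.m_closed[OF st.T_sub x y] .
        have xc: "x \<in> carrier G" "y \<in> carrier G" using x y st.T_carrier by auto
        show "\<psi> (x \<otimes> y) = \<psi> x * \<psi> y" using chrD(1)[OF c(1) xc] x y xy unfolding \<psi>_def by simp
      next
        fix x assume x: "x \<in> st.T"
        have xc: "x \<in> carrier G" using x st.T_carrier by auto
        show "cmod (\<psi> x) = 1" using chrD(2)[OF c(1) xc] x unfolding \<psi>_def by simp
      next
        fix x assume "x \<notin> st.T" then show "\<psi> x = 0" unfolding \<psi>_def by simp
      qed
      moreover have "\<forall>x\<in>S. \<psi> x = \<phi> x" using c(2) st.S_T unfolding \<psi>_def by auto
      ultimately have "\<psi> \<in> E" unfolding E_def extn_def by simp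
      moreover have "\<chi> \<in> extn G st.T (carrier G) \<psi>" using c(1) unfolding extn_def \<psi>_def by simp
      ultimately show "\<chi> \<in> (\<Union>\<psi>\<in>E. extn G st.T (carrier G) \<psi>)" by blast
    next
      fix \<chi> assume "\<chi> \<in> (\<Union>\<psi>\<in>E. extn G st.T (carrier G) \<psi>)"
      then obtain \<psi> where p: "\<psi> \<in> E" "\<chi> \<in> extn G st.T (carrier G) \<psi>" by blast
      have "\<forall>x\<in>S. \<chi> x = \<phi> x" using p st.S_T unfolding E_def extn_def by auto
      then show "\<chi> \<in> extn G S (carrier G) \<phi>" using p(2) unfolding extn_def by simp
    qed
    have disj: "extn G st.T (carrier G) \<psi>1 \<inter> extn G st.T (carrier G) \<psi>2 = {}"
      if "\<psi>1 \<in> E" "\<psi>2 \<in> E" "\<psi>1 \<noteq> \<psi>2" for \<psi>1 \<psi>2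
    proof (rule ccontr)
      assume "extn G st.T (carrier G) \<psi>1 \<inter> extn G st.T (carrier G) \<psi>2 \<noteq> {}"
      then obtain \<chi> where c1: "\<chi> \<in> extn G st.T (carrier G) \<psi>1" and c2: "\<chi> \<in> extn G st.T (carrier G) \<psi>2" by blast
      have p1: "\<psi>1 \<in> chr G st.T" and p2: "\<psi>2 \<in> chr G st.T" using that unfolding E_def extn_def by auto
      have "\<psi>1 = \<psi>2"
      proof
        fix x show "\<psi>1 x = \<psi>2 x"
        proof (cases "x \<in> st.T")
          case True then show ?thesis using c1 c2 unfolding extn_def by auto
        next
          case False then show ?thesis using chrD(3)[OF p1] chrD(3)[OF p2] by simp
        qed
      qed
      then show False using that(3) by simp
    qed
    have "card (extn G S (carrier G) \<phi>) = (\<Sum>\<psi>\<in>E. card (extn G st.T (carrier G) \<psi>))"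
      unfolding dec by (rule card_UN_disjoint[OF finE]) (use finEx disj in auto)
    then have "card (extn G S (carrier G) \<phi>) * card st.T = (\<Sum>\<psi>\<in>E. card (extn G st.T (carrier G) \<psi>) * card st.T)"
      by (simp add: sum_distrib_right)
    also have "\<dots> = (\<Sum>\<psi>\<in>E. card (carrier G))"
      by (rule sum.cong) (use IH in \<open>auto simp: E_def extn_def\<close>)
    also have "\<dots> = st.m * card (carrier G)" using cE by simp
    finally have "st.m * (card (extn G S (carrier G) \<phi>) * card S) = st.m * card (carrier G)"
      using cT by (simp add: mult_ac)
    then show ?thesis using m2 by simp
  qed
qed

lemma characters_chr: "characters G = chr G (carrier G)"
  unfolding characters_def character_def chr_def by simp

lemma card_triv:
  assumes S: "subgroup S G"
  shows "card {\<chi> \<in> characters G. \<forall>s\<in>S. \<chi> s = 1} * card S = card (carrier G)"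
proof -
  define \<phi> where "\<phi> x = (if x \<in> S then 1 else 0 :: complex)" for x
  have Ssub: "S \<subseteq> carrier G" using subgroup.subset[OF S] .
  have e: "\<phi> \<in> chr G S" unfolding chr_def \<phi>_def using subgroup.m_closed[OF S] by auto
  have eq: "extn G S (carrier G) \<phi> = {\<chi> \<in> characters G. \<forall>s\<in>S. \<chi> s = 1}"
    unfolding extn_def characters_chr \<phi>_def by auto
  show ?thesis using ext_main[OF S e] eq by simp
qed

lemma card_chars: "card (characters G) = card (carrier G)"
proof -
  have "{\<chi> \<in> characters G. \<forall>s\<in>{\<one>}. \<chi> s = 1} = characters G"
    using chr_one[OF subgroup_self] unfolding characters_chr by auto
  then show ?thesis using card_triv[OF triv_subgroup] by simp
qed

lemma fin_chars: "finite (characters G)"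
proof -
  have "card (carrier G) > 0" using fin by (auto simp: card_gt_0_iff)
  show ?thesis
  proof (rule ccontr)
    assume "infinite (characters G)"
    then have "card (characters G) = 0" by simp
    then show False using card_chars \<open>card (carrier G) > 0\<close> by simp
  qed
qed

lemma separation:
  assumes x: "x \<in> carrier G" "x \<noteq> \<one>"
  shows "\<exists>\<chi>\<in>characters G. \<chi> x \<noteq> 1"
proof (rule ccontr)
  assume "\<not> ?thesis"
  then have all: "\<And>\<chi>. \<chi> \<in> characters G \<Longrightarrow> \<chi> x = 1" by blast
  interpret st: stepctx G "{\<one>}" x by unfold_locales (use x triv_subgroup in auto)
  have cT: "card st.T = st.m" using st.card_T by simp
  have m2: "2 \<le> st.m" by (rule st.m2)
  have "{\<chi> \<in> characters G. \<forall>s\<in>st.T. \<chi> s = 1} = characters G"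
  proof (intro equalityI subsetI)
    fix \<chi> assume c: "\<chi> \<in> characters G"
    have cc: "\<chi> \<in> chr G (carrier G)" using c characters_chr by simp
    have "\<chi> t = 1" if t: "t \<in> st.T" for t
    proof -
      obtain s and k :: nat where sk: "s \<in> {\<one>}" "t = s \<otimes> x [^] k" using st.T_form[OF t] by blast
      have "t = x [^] k" using sk x by simp
      then show ?thesis using chr_pow[OF subgroup_self cc x(1)] all[OF c] by simp
    qed
    then show "\<chi> \<in> {\<chi> \<in> characters G. \<forall>s\<in>st.T. \<chi> s = 1}" using c by simp
  qed simp
  then have "card (characters G) * st.m = card (carrier G)" using card_triv[OF st.T_sub] cT by simp
  then have "card (carrier G) * st.m = card (carrier G) * 1" using card_chars by simp
  moreover have "card (carrier G) > 0" using fin by (auto simp: card_gt_0_iff)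
  ultimately have "st.m = 1" by simp
  then show False using m2 by simp
qed

end

lemma prod_bool:
  assumes "finite I"
  shows "(\<Prod>i\<in>I. if Q i then (1::complex) else 0) = (if \<forall>i\<in>I. Q i then 1 else 0)"
proof (cases "\<forall>i\<in>I. Q i")
  case True then show ?thesis by simp
next
  case False
  then obtain i where "i \<in> I" "\<not> Q i" by blast
  then have "(\<Prod>i\<in>I. if Q i then (1::complex) else 0) = 0"
    using assms by (intro prod_zero) auto
  then show ?thesis using False by simp
qed

context fcg
begin

lemma chr_mult: "f \<in> chr G U \<Longrightarrow> h \<in> chr G U \<Longrightarrow> (\<lambda>y. f y * h y) \<in> chr G U"
  unfolding chr_def by (simp add: mult_ac norm_mult)

lemma chr_cnj: "f \<in> chr G U \<Longrightarrow> (\<lambda>y. cnj (f y)) \<in> chr G U"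
  unfolding chr_def by simp

lemma cnj_self: assumes "f \<in> chr G U" "y \<in> U" shows "f y * cnj (f y) = 1"
proof -
  have "f y * cnj (f y) = of_real ((cmod (f y))\<^sup>2)" by (rule complex_norm_square[symmetric])
  then show ?thesis using chrD(2)[OF assms] by simp
qed

lemma sum_sub:
  assumes S: "subgroup S G" and f: "\<And>x y. x \<in> S \<Longrightarrow> y \<in> S \<Longrightarrow> f (x \<otimes> y) = f x * f y"
  shows "(\<Sum>s\<in>S. f s) = (if \<forall>s\<in>S. f s = 1 then of_nat (card S) else (0::complex))"
proof (cases "\<forall>s\<in>S. f s = 1")
  case True then show ?thesis by simp
next
  case False
  then obtain s0 where s0: "s0 \<in> S" "f s0 \<noteq> 1" by blast
  have SC: "\<And>x. x \<in> S \<Longrightarrow> x \<in> carrier G" using subgroup.mem_carrier[OF S] .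
  have s0c: "s0 \<in> carrier G" using SC[OF s0(1)] .
  have is0: "inv s0 \<in> S" using subgroup.m_inv_closed[OF S s0(1)] .
  have "(\<Sum>s\<in>S. f s) = (\<Sum>s\<in>S. f (s0 \<otimes> s))"
  proof (rule sum.reindex_bij_witness[of S "\<lambda>s. s0 \<otimes> s" "\<lambda>s. inv s0 \<otimes> s"])
    fix a assume a: "a \<in> S"
    have ac: "a \<in> carrier G" using SC[OF a] .
    show "s0 \<otimes> (inv s0 \<otimes> a) = a" using ac s0c by (simp add: m_assoc[symmetric])
    show "inv s0 \<otimes> a \<in> S" using subgroup.m_closed[OF S is0 a] .
    show "inv s0 \<otimes> (s0 \<otimes> a) = a" using ac s0c by (simp add: m_assoc[symmetric])
    show "s0 \<otimes> a \<in> S" using subgroup.m_closed[OF S s0(1) a] .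
    show "f (s0 \<otimes> (inv s0 \<otimes> a)) = f a" using ac s0c by (simp add: m_assoc[symmetric])
  qed
  also have "\<dots> = (\<Sum>s\<in>S. f s0 * f s)" using f[OF s0(1)] by simp
  also have "\<dots> = f s0 * (\<Sum>s\<in>S. f s)" by (simp add: sum_distrib_left)
  finally have "(1 - f s0) * (\<Sum>s\<in>S. f s) = 0" by (simp add: algebra_simps)
  then have "(\<Sum>s\<in>S. f s) = 0" using s0(2) by simp
  then show ?thesis using False by (simp only: if_False)
qed

lemma sum_chars:
  assumes x: "x \<in> carrier G"
  shows "(\<Sum>\<chi>\<in>characters G. \<chi> x) = (if x = \<one> then of_nat (card (carrier G)) else 0)"
proof (cases "x = \<one>")
  case True
  have "(\<Sum>\<chi>\<in>characters G. \<chi> x) = (\<Sum>\<chi>\<in>characters G. 1)"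
    using True chr_one[OF subgroup_self] characters_chr by (intro sum.cong) auto
  then show ?thesis using True card_chars by simp
next
  case False
  obtain \<psi> where psi: "\<psi> \<in> characters G" "\<psi> x \<noteq> 1" using separation[OF x False] by blast
  have pc: "\<psi> \<in> chr G (carrier G)" using psi characters_chr by simp
  have "(\<Sum>\<chi>\<in>characters G. \<chi> x) = (\<Sum>\<chi>\<in>characters G. \<psi> x * \<chi> x)"
  proof (rule sum.reindex_bij_witness[of _ "\<lambda>\<chi> y. \<psi> y * \<chi> y" "\<lambda>\<chi> y. cnj (\<psi> y) * \<chi> y"])
    fix a assume a: "a \<in> characters G"
    have ac: "a \<in> chr G (carrier G)" using a characters_chr by simp
    have e1: "\<psi> y * (cnj (\<psi> y) * a y) = a y" for y
    proof (cases "y \<in> carrier G")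
      case True then show ?thesis using cnj_self[OF pc True] by (simp add: mult.assoc[symmetric])
    next
      case False then show ?thesis using chrD(3)[OF ac False] by simp
    qed
    have e2: "cnj (\<psi> y) * (\<psi> y * a y) = a y" for y
    proof (cases "y \<in> carrier G")
      case True then show ?thesis using cnj_self[OF pc True] by (simp add: mult_ac)
    next
      case False then show ?thesis using chrD(3)[OF ac False] by simp
    qed
    show "(\<lambda>y. \<psi> y * (cnj (\<psi> y) * a y)) = a" by (rule ext) (rule e1)
    show "(\<lambda>y. cnj (\<psi> y) * a y) \<in> characters G"
      using chr_mult[OF chr_cnj[OF pc] ac] characters_chr by simp
    show "(\<lambda>y. cnj (\<psi> y) * (\<psi> y * a y)) = a" by (rule ext) (rule e2)
    show "(\<lambda>y. \<psi> y * a y) \<in> characters G"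
      using chr_mult[OF pc ac] characters_chr by simp
    show "\<psi> x * (cnj (\<psi> x) * a x) = a x" by (rule e1)
  qed
  also have "\<dots> = \<psi> x * (\<Sum>\<chi>\<in>characters G. \<chi> x)" by (simp add: sum_distrib_left)
  finally have "(1 - \<psi> x) * (\<Sum>\<chi>\<in>characters G. \<chi> x) = 0" by (simp add: algebra_simps)
  then show ?thesis using psi(2) False by simp
qed

end

context fcg
begin

lemma main:
  fixes Gs :: "nat \<Rightarrow> 'a set" and H :: "'a set" and \<chi> :: "'a \<Rightarrow> complex" and I :: "nat set"
  assumes finI: "finite I" and Gs: "\<And>i. i \<in> I \<Longrightarrow> subgroup (Gs i) G" and H: "subgroup H G"
    and chi: "character G \<chi>"
    and K: "K = carrier G \<inter> (\<Inter>i\<in>I. Gs i)"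
  shows "of_nat (card {cs \<in> I \<rightarrow>\<^sub>E characters G.
                 (\<forall>i\<in>I. \<forall>g\<in>Gs i. cs i g = 1) \<and>
                 (\<forall>h\<in>H. (\<Prod>i\<in>I. cs i h) = \<chi> h)})
         = (of_nat (card (H \<inter> K)) / of_nat (card H)
           * (\<Prod>i\<in>I. of_nat (card (carrier G)) / of_nat (card (Gs i)))
           * (if (\<forall>h\<in>H \<inter> K. \<chi> h = 1) then 1 else 0) :: complex)"
proof -
  define A where "A = characters G"
  define N where "N = card (carrier G)"
  define P where "P = I \<rightarrow>\<^sub>E A"
  define C where "C = {cs \<in> P. (\<forall>i\<in>I. \<forall>g\<in>Gs i. cs i g = 1) \<and> (\<forall>h\<in>H. (\<Prod>i\<in>I. cs i h) = \<chi> h)}"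
  define a where "a i c = (\<Sum>g\<in>Gs i. c g) / of_nat (card (Gs i))" for i and c :: "'a \<Rightarrow> complex"
  define b where "b cs = (\<Sum>h\<in>H. (\<Prod>i\<in>I. cs i h) * cnj (\<chi> h)) / of_nat (card H)" for cs :: "nat \<Rightarrow> 'a \<Rightarrow> complex"
  have Gsub: "\<And>x. i \<in> I \<Longrightarrow> x \<in> Gs i \<Longrightarrow> x \<in> carrier G" for i
    using subgroup.mem_carrier[OF Gs] by blast
  have cGs: "card (Gs i) > 0" if "i \<in> I" for i using subgroup.finite_imp_card_positive[OF Gs[OF that] fin] .
  have finGs: "finite (Gs i)" if "i \<in> I" for i using cGs[OF that] card.infinite by fastforce
  have Hsub: "\<And>x. x \<in> H \<Longrightarrow> x \<in> carrier G" using subgroup.mem_carrier[OF H] .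
  have cH: "card H > 0" using subgroup.finite_imp_card_positive[OF H fin] .
  have finH: "finite H" using cH card.infinite by fastforce
  have "\<chi> \<in> characters G" using chi unfolding characters_def by simp
  then have chic: "\<chi> \<in> chr G (carrier G)" using characters_chr by simp
  have finA: "finite A" unfolding A_def by (rule fin_chars)
  have finP: "finite P" unfolding P_def using finI finA by (simp add: finite_PiE)
  have Achr: "c \<in> chr G (carrier G)" if "c \<in> A" for c using that characters_chr A_def by simp
  have PA: "cs i \<in> A" if "cs \<in> P" "i \<in> I" for cs i using that unfolding P_def by (auto simp: PiE_iff)

  have a_eq: "a i c = (if \<forall>g\<in>Gs i. c g = 1 then 1 else 0)" if i: "i \<in> I" and c: "c \<in> A" for i c
  proof -
    have "(\<Sum>g\<in>Gs i. c g) = (if \<forall>g\<in>Gs i. c g = 1 then of_nat (card (Gs i)) else 0)"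
      by (rule sum_sub[OF Gs[OF i]]) (use chrD(1)[OF Achr[OF c]] Gsub[OF i] in auto)
    then show ?thesis unfolding a_def using cGs[OF i] by simp
  qed

  have b_eq: "b cs = (if \<forall>h\<in>H. (\<Prod>i\<in>I. cs i h) = \<chi> h then 1 else 0)" if cs: "cs \<in> P" for cs
  proof -
    define f where "f h = (\<Prod>i\<in>I. cs i h) * cnj (\<chi> h)" for h
    have fm: "f (x \<otimes> y) = f x * f y" if x: "x \<in> H" and y: "y \<in> H" for x y
    proof -
      have xc: "x \<in> carrier G" "y \<in> carrier G" using Hsub x y by auto
      have "(\<Prod>i\<in>I. cs i (x \<otimes> y)) = (\<Prod>i\<in>I. cs i x * cs i y)"
        by (rule prod.cong) (use chrD(1)[OF Achr[OF PA[OF cs]] xc] in auto)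
      also have "\<dots> = (\<Prod>i\<in>I. cs i x) * (\<Prod>i\<in>I. cs i y)" by (rule prod.distrib)
      finally show ?thesis unfolding f_def using chrD(1)[OF chic xc] by (simp add: mult_ac)
    qed
    have fe: "f h = 1 \<longleftrightarrow> (\<Prod>i\<in>I. cs i h) = \<chi> h" if h: "h \<in> H" for h
    proof -
      have cs1: "\<chi> h * cnj (\<chi> h) = 1" using cnj_self[OF chic Hsub[OF h]] .
      show ?thesis
      proof
        assume "f h = 1"
        then have e: "(\<Prod>i\<in>I. cs i h) * cnj (\<chi> h) = 1" unfolding f_def by simp
        have "(\<Prod>i\<in>I. cs i h) = (\<Prod>i\<in>I. cs i h) * (\<chi> h * cnj (\<chi> h))" using cs1 by simp
        also have "\<dots> = ((\<Prod>i\<in>I. cs i h) * cnj (\<chi> h)) * \<chi> h" by (simp only: mult_ac)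
        also have "\<dots> = \<chi> h" using e by simp
        finally show "(\<Prod>i\<in>I. cs i h) = \<chi> h" .
      next
        assume "(\<Prod>i\<in>I. cs i h) = \<chi> h"
        then show "f h = 1" unfolding f_def using cs1 by simp
      qed
    qed
    have "(\<Sum>h\<in>H. f h) = (if \<forall>h\<in>H. f h = 1 then of_nat (card H) else 0)"
      by (rule sum_sub[OF H]) (rule fm)
    moreover have "(\<forall>h\<in>H. f h = 1) \<longleftrightarrow> (\<forall>h\<in>H. (\<Prod>i\<in>I. cs i h) = \<chi> h)" using fe by blast
    ultimately show ?thesis unfolding b_def f_def[symmetric] using cH by simp
  qed

  have step1: "of_nat (card C) = (\<Sum>cs\<in>P. (\<Prod>i\<in>I. a i (cs i)) * b cs)"
  proof -
    have "of_nat (card C) = (\<Sum>cs\<in>C. (1::complex))" by simp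
    also have "\<dots> = (\<Sum>cs\<in>P. if (\<forall>i\<in>I. \<forall>g\<in>Gs i. cs i g = 1) \<and> (\<forall>h\<in>H. (\<Prod>i\<in>I. cs i h) = \<chi> h) then 1 else 0)"
      unfolding C_def by (rule sum.inter_filter[OF finP])
    also have "\<dots> = (\<Sum>cs\<in>P. (\<Prod>i\<in>I. a i (cs i)) * b cs)"
    proof (rule sum.cong[OF refl])
      fix cs assume cs: "cs \<in> P"
      have "(\<Prod>i\<in>I. a i (cs i)) = (\<Prod>i\<in>I. if \<forall>g\<in>Gs i. cs i g = 1 then 1 else 0)"
        by (rule prod.cong) (use a_eq PA[OF cs] in auto)
      also have "\<dots> = (if \<forall>i\<in>I. \<forall>g\<in>Gs i. cs i g = 1 then 1 else 0)" by (rule prod_bool[OF finI])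
      finally show "(if (\<forall>i\<in>I. \<forall>g\<in>Gs i. cs i g = 1) \<and> (\<forall>h\<in>H. (\<Prod>i\<in>I. cs i h) = \<chi> h) then 1 else 0)
          = (\<Prod>i\<in>I. a i (cs i)) * b cs" using b_eq[OF cs] by simp
    qed
    finally show ?thesis .
  qed
  have step2: "(\<Sum>cs\<in>P. (\<Prod>i\<in>I. a i (cs i)) * b cs)
      = (\<Sum>h\<in>H. cnj (\<chi> h) * (\<Sum>cs\<in>P. \<Prod>i\<in>I. a i (cs i) * cs i h)) / of_nat (card H)"
  proof -
    have "(\<Sum>cs\<in>P. (\<Prod>i\<in>I. a i (cs i)) * b cs)
        = (\<Sum>cs\<in>P. \<Sum>h\<in>H. cnj (\<chi> h) * (\<Prod>i\<in>I. a i (cs i) * cs i h) / of_nat (card H))"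
    proof (rule sum.cong[OF refl])
      fix cs
      have "(\<Prod>i\<in>I. a i (cs i)) * b cs = (\<Sum>h\<in>H. (\<Prod>i\<in>I. a i (cs i)) * ((\<Prod>i\<in>I. cs i h) * cnj (\<chi> h))) / of_nat (card H)"
        unfolding b_def by (simp add: sum_distrib_left)
      also have "\<dots> = (\<Sum>h\<in>H. cnj (\<chi> h) * (\<Prod>i\<in>I. a i (cs i) * cs i h) / of_nat (card H))"
        by (simp add: sum_divide_distrib prod.distrib mult_ac)
      finally show "(\<Prod>i\<in>I. a i (cs i)) * b cs = (\<Sum>h\<in>H. cnj (\<chi> h) * (\<Prod>i\<in>I. a i (cs i) * cs i h) / of_nat (card H))" .
    qed
    also have "\<dots> = (\<Sum>h\<in>H. \<Sum>cs\<in>P. cnj (\<chi> h) * (\<Prod>i\<in>I. a i (cs i) * cs i h) / of_nat (card H))"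
      by (rule sum.swap)
    also have "\<dots> = (\<Sum>h\<in>H. cnj (\<chi> h) * (\<Sum>cs\<in>P. \<Prod>i\<in>I. a i (cs i) * cs i h)) / of_nat (card H)"
      by (simp add: sum_divide_distrib sum_distrib_left)
    finally show ?thesis .
  qed
  have step3: "(\<Sum>cs\<in>P. \<Prod>i\<in>I. a i (cs i) * cs i h) = (\<Prod>i\<in>I. \<Sum>c\<in>A. a i c * c h)" for h
    unfolding P_def by (rule prod_sum_PiE[symmetric]) (use finI finA in auto)
  have step4: "(\<Sum>c\<in>A. a i c * c h) = (if h \<in> Gs i then of_nat N / of_nat (card (Gs i)) else 0)"
    if i: "i \<in> I" and h: "h \<in> H" for i h
  proof -
    have hc: "h \<in> carrier G" using Hsub[OF h] .
    have "(\<Sum>c\<in>A. a i c * c h) = (\<Sum>c\<in>A. (\<Sum>g\<in>Gs i. c (g \<otimes> h)) / of_nat (card (Gs i)))"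
    proof (rule sum.cong[OF refl])
      fix c assume c: "c \<in> A"
      have "(\<Sum>g\<in>Gs i. c g) * c h = (\<Sum>g\<in>Gs i. c (g \<otimes> h))"
        unfolding sum_distrib_right
        by (rule sum.cong[OF refl]) (use chrD(1)[OF Achr[OF c] _ hc] Gsub[OF i] in auto)
      then show "a i c * c h = (\<Sum>g\<in>Gs i. c (g \<otimes> h)) / of_nat (card (Gs i))"
        unfolding a_def by simp
    qed
    also have "\<dots> = (\<Sum>c\<in>A. \<Sum>g\<in>Gs i. c (g \<otimes> h)) / of_nat (card (Gs i))"
      by (simp add: sum_divide_distrib)
    also have "(\<Sum>c\<in>A. \<Sum>g\<in>Gs i. c (g \<otimes> h)) = (\<Sum>g\<in>Gs i. \<Sum>c\<in>A. c (g \<otimes> h))" by (rule sum.swap)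
    also have "\<dots> = (\<Sum>g\<in>Gs i. if g = inv h then of_nat N else 0)"
    proof (rule sum.cong[OF refl])
      fix g assume g: "g \<in> Gs i"
      have gc: "g \<in> carrier G" using Gsub[OF i g] .
      have "g \<otimes> h = \<one> \<longleftrightarrow> g = inv h"
      proof
        assume "g \<otimes> h = \<one>" then show "g = inv h" using gc hc by (simp add: inv_equality)
      next
        assume "g = inv h" then show "g \<otimes> h = \<one>" using hc by simp
      qed
      then show "(\<Sum>c\<in>A. c (g \<otimes> h)) = (if g = inv h then of_nat N else 0)"
        using sum_chars[of "g \<otimes> h"] gc hc unfolding A_def N_def by simp
    qed
    also have "\<dots> = (if inv h \<in> Gs i then of_nat N else 0)" using finGs[OF i] by simp
    also have "inv h \<in> Gs i \<longleftrightarrow> h \<in> Gs i"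
      using subgroup.m_inv_closed[OF Gs[OF i], of h] subgroup.m_inv_closed[OF Gs[OF i], of "inv h"] hc by auto
    finally show ?thesis by simp
  qed
  define PP where "PP = (\<Prod>i\<in>I. of_nat N / of_nat (card (Gs i)) :: complex)"
  have step5: "(\<Prod>i\<in>I. \<Sum>c\<in>A. a i c * c h) = (if \<forall>i\<in>I. h \<in> Gs i then PP else 0)" if h: "h \<in> H" for h
  proof -
    have "(\<Prod>i\<in>I. \<Sum>c\<in>A. a i c * c h) = (\<Prod>i\<in>I. (if h \<in> Gs i then 1 else 0) * (of_nat N / of_nat (card (Gs i))))"
      by (rule prod.cong[OF refl]) (use step4 h in auto)
    also have "\<dots> = (\<Prod>i\<in>I. (if h \<in> Gs i then 1 else 0)) * PP" unfolding PP_def by (rule prod.distrib)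
    also have "(\<Prod>i\<in>I. (if h \<in> Gs i then (1::complex) else 0)) = (if \<forall>i\<in>I. h \<in> Gs i then 1 else 0)"
      by (rule prod_bool[OF finI])
    finally show ?thesis by simp
  qed
  have HK: "H \<inter> K = {h \<in> H. \<forall>i\<in>I. h \<in> Gs i}" unfolding K using Hsub by auto
  have HKsub: "subgroup (H \<inter> K) G"
  proof (rule subgroupI)
    show "H \<inter> K \<subseteq> carrier G" unfolding K by auto
    show "H \<inter> K \<noteq> {}"
    proof -
      have "\<one> \<in> H \<inter> K" unfolding HK using subgroup.one_closed[OF H] subgroup.one_closed[OF Gs] by auto
      then show ?thesis by blast
    qed
  next
    fix x assume "x \<in> H \<inter> K"
    then have x: "x \<in> H" "\<And>i. i \<in> I \<Longrightarrow> x \<in> Gs i" unfolding HK by auto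
    show "inv x \<in> H \<inter> K" unfolding HK
      using subgroup.m_inv_closed[OF H x(1)] subgroup.m_inv_closed[OF Gs x(2)] by auto
  next
    fix x y assume "x \<in> H \<inter> K" "y \<in> H \<inter> K"
    then have x: "x \<in> H" "\<And>i. i \<in> I \<Longrightarrow> x \<in> Gs i" and y: "y \<in> H" "\<And>i. i \<in> I \<Longrightarrow> y \<in> Gs i"
      unfolding HK by auto
    show "x \<otimes> y \<in> H \<inter> K" unfolding HK
      using subgroup.m_closed[OF H x(1) y(1)] subgroup.m_closed[OF Gs x(2) y(2)] by auto
  qed
  have finHK: "finite (H \<inter> K)" using finH by simp
  have step6: "(\<Sum>h\<in>H. cnj (\<chi> h) * (if \<forall>i\<in>I. h \<in> Gs i then PP else 0)) = PP * (\<Sum>h\<in>H \<inter> K. cnj (\<chi> h))"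
  proof -
    have "(\<Sum>h\<in>H \<inter> K. cnj (\<chi> h)) = (\<Sum>h\<in>H. if \<forall>i\<in>I. h \<in> Gs i then cnj (\<chi> h) else 0)"
      unfolding HK by (rule sum.inter_filter[OF finH])
    then show ?thesis by (simp add: sum_distrib_left mult_ac if_distrib cong: if_cong)
  qed
  have step7: "(\<Sum>h\<in>H \<inter> K. cnj (\<chi> h)) = (if \<forall>h\<in>H \<inter> K. \<chi> h = 1 then of_nat (card (H \<inter> K)) else 0)"
  proof -
    have "(\<Sum>h\<in>H \<inter> K. \<chi> h) = (if \<forall>h\<in>H \<inter> K. \<chi> h = 1 then of_nat (card (H \<inter> K)) else 0)"
      by (rule sum_sub[OF HKsub]) (use chrD(1)[OF chic] subgroup.mem_carrier[OF HKsub] in auto)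
    then have "cnj (\<Sum>h\<in>H \<inter> K. \<chi> h) = cnj (if \<forall>h\<in>H \<inter> K. \<chi> h = 1 then of_nat (card (H \<inter> K)) else 0)" by simp
    then show ?thesis by (simp add: cnj_sum)
  qed
  have "of_nat (card C) = (\<Sum>h\<in>H. cnj (\<chi> h) * (if \<forall>i\<in>I. h \<in> Gs i then PP else 0)) / of_nat (card H)"
    using step1 step2 step3 step5 by simp
  also have "\<dots> = PP * (if \<forall>h\<in>H \<inter> K. \<chi> h = 1 then of_nat (card (H \<inter> K)) else 0) / of_nat (card H)"
    using step6 step7 by simp
  finally have "of_nat (card C) = PP * (if \<forall>h\<in>H \<inter> K. \<chi> h = 1 then of_nat (card (H \<inter> K)) else 0) / of_nat (card H)" .
  then show ?thesis unfolding C_def P_def A_def PP_def N_def by simp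
qed

end

theorem lemma6p10:
  fixes G :: "('a, 'b) monoid_scheme" and Gs :: "nat \<Rightarrow> 'a set" and H :: "'a set"
    and \<chi> :: "'a \<Rightarrow> complex" and n :: nat
  assumes "comm_group G" and "finite (carrier G)"
    and "\<And>i. i \<in> {1..n} \<Longrightarrow> subgroup (Gs i) G"
    and "subgroup H G"
    and "character G \<chi>"
  defines "K \<equiv> carrier G \<inter> (\<Inter>i\<in>{1..n}. Gs i)"
  shows "real (card {cs \<in> {1..n} \<rightarrow>\<^sub>E characters G.
                 (\<forall>i\<in>{1..n}. \<forall>g\<in>Gs i. cs i g = 1) \<and>
                 (\<forall>h\<in>H. (\<Prod>i\<in>{1..n}. cs i h) = \<chi> h)})
         = real (card (H \<inter> K)) / real (card H)
           * (\<Prod>i\<in>{1..n}. real (card (carrier G)) / real (card (Gs i)))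
           * (if (\<forall>h\<in>H \<inter> K. \<chi> h = 1) then 1 else 0)"
proof -
  interpret fcg G using assms(1,2) by (simp add: fcg_def fcg_axioms_def)
  have m: "of_nat (card {cs \<in> {1..n} \<rightarrow>\<^sub>E characters G.
                 (\<forall>i\<in>{1..n}. \<forall>g\<in>Gs i. cs i g = 1) \<and>
                 (\<forall>h\<in>H. (\<Prod>i\<in>{1..n}. cs i h) = \<chi> h)})
         = (of_nat (card (H \<inter> K)) / of_nat (card H)
           * (\<Prod>i\<in>{1..n}. of_nat (card (carrier G)) / of_nat (card (Gs i)))
           * (if (\<forall>h\<in>H \<inter> K. \<chi> h = 1) then 1 else 0) :: complex)"
    by (rule main) (use assms K_def in auto)
  show ?thesis
  proof (rule of_real_eq_iff[where 'a = complex, THEN iffD1])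
    show "complex_of_real (real (card {cs \<in> {1..n} \<rightarrow>\<^sub>E characters G.
                 (\<forall>i\<in>{1..n}. \<forall>g\<in>Gs i. cs i g = 1) \<and>
                 (\<forall>h\<in>H. (\<Prod>i\<in>{1..n}. cs i h) = \<chi> h)}))
         = complex_of_real (real (card (H \<inter> K)) / real (card H)
           * (\<Prod>i\<in>{1..n}. real (card (carrier G)) / real (card (Gs i)))
           * (if (\<forall>h\<in>H \<inter> K. \<chi> h = 1) then 1 else 0))"
      using m by simp
  qed
qed

end
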